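(* Fix a private dataset $X=(x_1,\dots,x_n)\in(\mathbb{R}^d)^n$ and a finite set $B\subset\mathbb{R}^d$ of generated samples. Let $\mathcal{D}=\{D_1,\dots,D_N\}$ be a finite set of discriminators $D_j:\mathbb{R}^d\to[0,1]$. Suppose that: (i) for every $x\in X$ there exists $x_b\in B$ with $\|x-x_b\|_2\le\gamma$; (ii) $\mathcal{D}$ contains the constant discriminator $D^{1/2}$, which satisfies $D^{1/2}(x)=1/2$ for all $x$; (iii) every $D\in\mathcal{D}$ is $L$-Lipschitz with respect to $\|\cdot\|_2$. Then there exists a distribution $\phi\in\Delta(B)$ such that $(\phi, D^{1/2})$ is an $L\gamma$-approximate equilibrium of the post-GAN game. Consequently the game value $V$ satisfies $1\le V\le 1+L\gamma$.
   Context: Let $p_X$ be the empirical distribution of $X$. For $x\in\mathbb{R}^d$ and $D\in\mathcal{D}$, the payoff is $$U(x,D)=\mathbb{E}_{x'\sim p_X}[D(x')]+(1-D(x)).$$ For a distribution $\phi$ over $B$ and a distribution $\psi$ over $\mathcal{D}$, define $U(\phi,D)=\mathbb{E}_{x\sim\phi}[U(x,D)]$ and $U(\cdot,\psi)=\mathbb{E}_{D\sim\psi}[U(\cdot,D)]$. A mixture of discriminators, i.e. a distribution $\overline D$ over $\mathcal{D}$, is identified with the function $x\mapsto\mathbb{E}_{D\sim\overline D}[D(x)]$. $\Delta(B)$ denotes the set of probability distributions on $B$. A pair $(\overline D,\overline\phi)$, with $\overline D$ a mixture over $\mathcal{D}$ and $\overline\phi\in\Delta(B)$, is an $\alpha$-approximate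 equilibrium of the post-GAN game if $$\max_{D_j\in\mathcal{D}}U(\overline\phi,D_j)\le U(\overline\phi,\overline D)+\alpha \quad\text{and}\quad \min_{\phi\in\Delta(B)}U(\phi,\overline D)\ge U(\overline\phi,\overline D)-\alpha .$$ The game value is $$V=\min_{\phi\in\Delta(B)}\max_{j\in[N]}U(\phi,D_j)=\max_{\psi\in\Delta(\mathcal{D})}\min_{x\in B}U(x,\psi),$$ which is well defined by the minimax theorem. *)

theory Defs
  imports "HOL-Analysis.Analysis"
begin

text \<open>Dataset X = (x 0, ..., x (n-1)) in (R^d)^n; discriminators are functions R^d -> R.
  Empirical expectation of D under p_X.\<close>
definition emp_mean :: "(nat \<Rightarrow> 'a) \<Rightarrow> nat \<Rightarrow> ('a \<Rightarrow> real) \<Rightarrow> real" where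
  "emp_mean x n D = (\<Sum>i<n. D (x i)) / real n"

definition payoff :: "(nat \<Rightarrow> 'a) \<Rightarrow> nat \<Rightarrow> 'a \<Rightarrow> ('a \<Rightarrow> real) \<Rightarrow> real" where
  "payoff x n y D = emp_mean x n D + (1 - D y)"

definition dist_on :: "'a set \<Rightarrow> ('a \<Rightarrow> real) \<Rightarrow> bool" where
  "dist_on B \<phi> \<longleftrightarrow> (\<forall>b\<in>B. 0 \<le> \<phi> b) \<and> (\<forall>b. b \<notin> B \<longrightarrow> \<phi> b = 0) \<and> sum \<phi> B = 1"

definition payoff_dist :: "(nat \<Rightarrow> 'a) \<Rightarrow> nat \<Rightarrow> 'a set \<Rightarrow> ('a \<Rightarrow> real) \<Rightarrow> ('a \<Rightarrow> real) \<Rightarrow> real" where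
  "payoff_dist x n B \<phi> D = (\<Sum>b\<in>B. \<phi> b * payoff x n b D)"

text \<open>A mixture psi of discriminators (weights on the finite set Ds), identified with
  the function y |-> E_{D ~ psi}[D y].\<close>
definition mixture :: "('b \<Rightarrow> real) set \<Rightarrow> (('b \<Rightarrow> real) \<Rightarrow> real) \<Rightarrow> 'b \<Rightarrow> real" where
  "mixture Ds \<psi> y = (\<Sum>D\<in>Ds. \<psi> D * D y)"

definition approx_equilibrium ::
  "(nat \<Rightarrow> 'a) \<Rightarrow> nat \<Rightarrow> 'a set \<Rightarrow> ('a \<Rightarrow> real) set \<Rightarrow> (('a \<Rightarrow> real) \<Rightarrow> real)
    \<Rightarrow> ('a \<Rightarrow> real) \<Rightarrow> real \<Rightarrow> bool" where
  "approx_equilibrium x n B Ds \<psi> \<phi> \<alpha> \<longleftrightarrow>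
     dist_on Ds \<psi> \<and> dist_on B \<phi> \<and>
     (\<forall>Dj\<in>Ds. payoff_dist x n B \<phi> Dj \<le> payoff_dist x n B \<phi> (mixture Ds \<psi>) + \<alpha>) \<and>
     (\<forall>\<phi>'. dist_on B \<phi>' \<longrightarrow>
        payoff_dist x n B \<phi>' (mixture Ds \<psi>) \<ge> payoff_dist x n B \<phi> (mixture Ds \<psi>) - \<alpha>)"

definition game_value :: "(nat \<Rightarrow> 'a) \<Rightarrow> nat \<Rightarrow> 'a set \<Rightarrow> ('a \<Rightarrow> real) set \<Rightarrow> real" where
  "game_value x n B Ds = (INF \<phi>\<in>{\<phi>. dist_on B \<phi>}. Max ((\<lambda>D. payoff_dist x n B \<phi> D) ` Ds))"

end

theory Submission
  imports Defs
begin

theorem theorem1: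
  fixes x :: "nat \<Rightarrow> real ^ 'd" and n :: nat
    and B :: "(real ^ 'd) set" and Ds :: "(real ^ 'd \<Rightarrow> real) set"
    and Dhalf :: "real ^ 'd \<Rightarrow> real" and L \<gamma> :: real
  assumes n_pos: "0 < n"
    and B_fin: "finite B"
    and Ds_fin: "finite Ds"
    and Ds_range: "\<forall>D\<in>Ds. \<forall>y. 0 \<le> D y \<and> D y \<le> 1"
    and cover: "\<forall>i<n. \<exists>b\<in>B. norm (x i - b) \<le> \<gamma>"
    and half_in: "Dhalf \<in> Ds"
    and half: "\<forall>y. Dhalf y = 1/2"
    and lip: "\<forall>D\<in>Ds. L-lipschitz_on UNIV D"
  shows "(\<exists>\<phi>. dist_on B \<phi> \<and>
           approx_equilibrium x n B Ds (\<lambda>D. if D = Dhalf then 1 else 0) \<phi> (L * \<gamma>))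
         \<and> 1 \<le> game_value x n B Ds \<and> game_value x n B Ds \<le> 1 + L * \<gamma>"
proof -
  define bi where "bi i = (SOME b. b \<in> B \<and> norm (x i - b) \<le> \<gamma>)" for i
  have bi: "bi i \<in> B \<and> norm (x i - bi i) \<le> \<gamma>" if "i < n" for i
    unfolding bi_def by (rule someI_ex) (use cover that in blast)
  have Lnn: "0 \<le> L" using lip half_in lipschitz_on_nonneg by blast
  have gnn: "0 \<le> \<gamma>" using bi[OF n_pos] norm_ge_zero order_trans by blast
  have npos: "real n > 0" using n_pos by simp
  define \<phi> where "\<phi> b = (\<Sum>i<n. if bi i = b then 1 else 0) / real n" for b
  have key: "(\<Sum>b\<in>B. \<phi> b * f b) = (\<Sum>i<n. f (bi i)) / real n" for f
  proof -
    have "(\<Sum>b\<in>B. \<phi> b * f b) = (\<Sum>b\<in>B. \<Sum>i<n. (if bi i = b then f b else 0)) / real n"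
      unfolding \<phi>_def sum_divide_distrib sum_distrib_right
      by (intro sum.cong refl) auto
    also have "(\<Sum>b\<in>B. \<Sum>i<n. (if bi i = b then f b else 0)) = (\<Sum>i<n. \<Sum>b\<in>B. (if bi i = b then f b else 0))"
      by (rule sum.swap)
    also have "\<dots> = (\<Sum>i<n. f (bi i))"
      using bi B_fin by (intro sum.cong) (auto simp: sum.delta')
    finally show ?thesis .
  qed
  have phi_dist: "dist_on B \<phi>"
    unfolding dist_on_def
  proof (intro conjI ballI allI impI)
    show "0 \<le> \<phi> b" for b unfolding \<phi>_def by (intro divide_nonneg_nonneg sum_nonneg) auto
    show "\<phi> b = 0" if "b \<notin> B" for b
      unfolding \<phi>_def using bi that by (auto intro!: sum.neutral)
    show "sum \<phi> B = 1" using key[of "\<lambda>_. 1"] npos by simp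
  qed
  have mix: "mixture Ds (\<lambda>D. if D = Dhalf then 1 else 0) = (\<lambda>y. 1/2)"
  proof
    fix y
    have "mixture Ds (\<lambda>D. if D = Dhalf then 1 else 0) y = (\<Sum>D\<in>Ds. if D = Dhalf then D y else 0)"
      unfolding mixture_def by (intro sum.cong) auto
    also have "\<dots> = 1/2" using Ds_fin half_in half by (simp add: sum.delta')
    finally show "mixture Ds (\<lambda>D. if D = Dhalf then 1 else 0) y = 1/2" .
  qed
  have pay_half: "payoff x n b (\<lambda>y. 1/2) = 1" for b
    unfolding payoff_def emp_mean_def using npos by simp
  have pd_half: "payoff_dist x n B \<phi>' (\<lambda>y. 1/2) = 1" if "dist_on B \<phi>'" for \<phi>'
    using that unfolding payoff_dist_def pay_half dist_on_def by simp
  have Dhalf_eq: "Dhalf = (\<lambda>y. 1/2)" using half by auto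
  have upper: "payoff_dist x n B \<phi> D \<le> 1 + L * \<gamma>" if "D \<in> Ds" for D
  proof -
    have "payoff_dist x n B \<phi> D = (\<Sum>b\<in>B. \<phi> b * (emp_mean x n D + 1)) - (\<Sum>b\<in>B. \<phi> b * D b)"
      unfolding payoff_dist_def payoff_def by (simp add: algebra_simps sum_subtractf)
    also have "(\<Sum>b\<in>B. \<phi> b * (emp_mean x n D + 1)) = emp_mean x n D + 1"
      using phi_dist unfolding dist_on_def by (simp add: sum_distrib_right[symmetric])
    also have "(\<Sum>b\<in>B. \<phi> b * D b) = (\<Sum>i<n. D (bi i)) / real n" by (rule key)
    finally have eq: "payoff_dist x n B \<phi> D = 1 + (\<Sum>i<n. D (x i) - D (bi i)) / real n"
      unfolding emp_mean_def by (simp add: sum_subtractf diff_divide_distrib)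
    have "(\<Sum>i<n. D (x i) - D (bi i)) \<le> (\<Sum>i<n. L * \<gamma>)"
    proof (rule sum_mono)
      fix i assume "i \<in> {..<n}"
      hence "norm (x i - bi i) \<le> \<gamma>" using bi by auto
      moreover have "dist (D (x i)) (D (bi i)) \<le> L * dist (x i) (bi i)"
        using lip that by (intro lipschitz_onD) auto
      ultimately have "dist (D (x i)) (D (bi i)) \<le> L * \<gamma>"
        using Lnn by (metis dist_norm mult_left_mono order_trans)
      thus "D (x i) - D (bi i) \<le> L * \<gamma>" by (simp add: dist_real_def)
    qed
    hence "(\<Sum>i<n. D (x i) - D (bi i)) / real n \<le> L * \<gamma>"
      using npos by (simp add: divide_le_eq mult.commute)
    thus ?thesis using eq by simp
  qed
  have eqm: "approx_equilibrium x n B Ds (\<lambda>D. if D = Dhalf then 1 else 0) \<phi> (L * \<gamma>)"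
    unfolding approx_equilibrium_def mix
  proof (intro conjI ballI allI impI)
    show "dist_on Ds (\<lambda>D. if D = Dhalf then 1 else 0)"
      unfolding dist_on_def using Ds_fin half_in by (simp add: sum.delta')
    show "dist_on B \<phi>" by (rule phi_dist)
    show "payoff_dist x n B \<phi> Dj \<le> payoff_dist x n B \<phi> (\<lambda>y. 1 / 2) + L * \<gamma>" if "Dj \<in> Ds" for Dj
      using upper[OF that] pd_half[OF phi_dist] by simp
    show "payoff_dist x n B \<phi> (\<lambda>y. 1 / 2) - L * \<gamma> \<le> payoff_dist x n B \<phi>' (\<lambda>y. 1 / 2)"
      if "dist_on B \<phi>'" for \<phi>'
      using pd_half[OF that] pd_half[OF phi_dist] Lnn gnn by simp
  qed
  have maxge: "1 \<le> Max ((\<lambda>D. payoff_dist x n B \<phi>' D) ` Ds)" if "dist_on B \<phi>'" for \<phi>'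
  proof -
    have "payoff_dist x n B \<phi>' Dhalf \<le> Max ((\<lambda>D. payoff_dist x n B \<phi>' D) ` Ds)"
      using Ds_fin half_in by (intro Max_ge) auto
    thus ?thesis using pd_half[OF that] Dhalf_eq by simp
  qed
  have ne: "{\<phi>. dist_on B \<phi>} \<noteq> {}" using phi_dist by auto
  have lowv: "1 \<le> game_value x n B Ds"
    unfolding game_value_def using ne maxge by (intro cINF_greatest) auto
  have "game_value x n B Ds \<le> Max ((\<lambda>D. payoff_dist x n B \<phi> D) ` Ds)"
    unfolding game_value_def
  proof (rule cINF_lower)
    show "bdd_below ((\<lambda>\<phi>'. Max ((\<lambda>D. payoff_dist x n B \<phi>' D) ` Ds)) ` {\<phi>. dist_on B \<phi>})"
      unfolding bdd_below_def using maxge by blast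
  qed (use phi_dist in auto)
  also have "\<dots> \<le> 1 + L * \<gamma>"
    using Ds_fin half_in upper by (subst Max_le_iff) auto
  finally show ?thesis using eqm phi_dist lowv by blast
qed

end
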